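(* Let $T$ be a tree of order $n\geq 3$ and let $\mathcal{G}$ be an arbitrary Abelian group of order at least $4$. Then there exists a labeling $f\colon E(T)\to\mathcal{G}\setminus\{0\}$ such that $w_f(u)\neq w_f(v)$ for every edge $uv$ of $T$.
   Context: $w_f(v)=\sum_{u\in N(v)}f(uv)$, the sum taken in $\mathcal{G}$; $0$ is the identity of $\mathcal{G}$. *)

theory Defs
  imports Main
begin

definition simple_graph :: "'a set \<Rightarrow> 'a set set \<Rightarrow> bool" where
  "simple_graph V E \<longleftrightarrow> finite V \<and>
     (\<forall>e\<in>E. \<exists>u v. u \<in> V \<and> v \<in> V \<and> u \<noteq> v \<and> e = {u, v})"

definition is_walk :: "'a set \<Rightarrow> 'a set set \<Rightarrow> 'a list \<Rightarrow> bool" where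
  "is_walk V E p \<longleftrightarrow> p \<noteq> [] \<and> set p \<subseteq> V \<and>
     (\<forall>i. Suc i < length p \<longrightarrow> {p ! i, p ! Suc i} \<in> E)"

definition connected_graph :: "'a set \<Rightarrow> 'a set set \<Rightarrow> bool" where
  "connected_graph V E \<longleftrightarrow>
     (\<forall>u\<in>V. \<forall>v\<in>V. \<exists>p. is_walk V E p \<and> hd p = u \<and> last p = v)"

definition is_cycle :: "'a set \<Rightarrow> 'a set set \<Rightarrow> 'a list \<Rightarrow> bool" where
  "is_cycle V E c \<longleftrightarrow> is_walk V E c \<and> distinct c \<and> length c \<ge> 3 \<and>
     {last c, hd c} \<in> E"

definition acyclic_graph :: "'a set \<Rightarrow> 'a set set \<Rightarrow> bool" where
  "acyclic_graph V E \<longleftrightarrow> (\<nexists>c. is_cycle V E c)"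

definition tree :: "'a set \<Rightarrow> 'a set set \<Rightarrow> bool" where
  "tree V E \<longleftrightarrow> simple_graph V E \<and> connected_graph V E \<and> acyclic_graph V E"

text \<open>Weighted degree: w_f(v) = sum of f(uv) over neighbours u of v, i.e. over edges containing v.\<close>
definition wsum :: "'a set set \<Rightarrow> ('a set \<Rightarrow> 'g::comm_monoid_add) \<Rightarrow> 'a \<Rightarrow> 'g" where
  "wsum E f v = (\<Sum>e\<in>{e\<in>E. v \<in> e}. f e)"

end

theory Submission
  imports Defs
begin


lemma avoid3:
  assumes G4: "infinite (UNIV :: 'g set) \<or> card (UNIV :: 'g set) \<ge> 4"
  shows "\<exists>x::'g. x \<noteq> p \<and> x \<noteq> q \<and> x \<noteq> r"
proof -
  have "\<exists>x::'g. x \<notin> {p,q,r}"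
  proof (cases "finite (UNIV :: 'g set)")
    case True
    show ?thesis
    proof (rule ccontr)
      assume "\<not> ?thesis"
      hence "UNIV = {p,q,r}" by blast
      hence "card (UNIV::'g set) = card {p,q,r}" by simp
      also have "\<dots> \<le> 3" using card_length[of "[p,q,r]"] by simp
      finally have "card (UNIV::'g set) \<le> 3" .
      thus False using G4 True by linarith
    qed
  next
    case False
    show ?thesis using ex_new_if_finite[OF False, of "{p,q,r}"] by simp
  qed
  thus ?thesis by blast
qed
lemma grp:
  fixes b t :: "'g::ab_group_add"
  assumes G4: "infinite (UNIV :: 'g set) \<or> card (UNIV :: 'g set) \<ge> 4"
    and b: "b \<noteq> 0"
  shows "\<exists>c z. c \<noteq> 0 \<and> z \<noteq> 0 \<and> b + sum (\<lambda>_. c) A + z \<noteq> t \<and>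
           b + sum (\<lambda>_. c) A \<noteq> 0 \<and> b + sum (\<lambda>_. c) A + z \<noteq> c"
proof -
  have "\<exists>c::'g. c \<noteq> 0 \<and> b + sum (\<lambda>_. c) A \<noteq> 0"
  proof (rule ccontr)
    assume H: "\<not> ?thesis"
    obtain c1 :: 'g where c1: "c1 \<noteq> 0" using avoid3[OF G4] by blast
    obtain c2 :: 'g where c2: "c2 \<noteq> 0" "c2 \<noteq> - c1" using avoid3[OF G4] by blast
    have s: "c1 + c2 \<noteq> 0" using c2(2) by (simp add: add_eq_0_iff)
    define S1 where "S1 = sum (\<lambda>_. c1) A"
    define S2 where "S2 = sum (\<lambda>_. c2) A"
    have e3: "sum (\<lambda>_. c1 + c2) A = S1 + S2"
      unfolding S1_def S2_def by (rule sum.distrib)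
    have e1: "b + S1 = 0" using H c1 unfolding S1_def by blast
    have e2: "b + S2 = 0" using H c2 unfolding S2_def by blast
    have e4: "b + (S1 + S2) = 0" using H s e3 by metis
    have "b = (b + S1) + (b + S2) - (b + (S1 + S2))"
      by (simp add: algebra_simps)
    also have "\<dots> = 0" unfolding e1 e2 e4 by simp
    finally have "b = 0" .
    thus False using b by simp
  qed
  then obtain c where c: "c \<noteq> 0" "b + sum (\<lambda>_. c) A \<noteq> 0" by blast
  define s where "s = b + sum (\<lambda>_. c) A"
  obtain z where z: "z \<noteq> 0" "z \<noteq> t - s" "z \<noteq> c - s" using avoid3[OF G4] by blast
  have "s + z \<noteq> t" using z(2) by (metis add_diff_cancel_left')
  moreover have "s + z \<noteq> c" using z(3) by (metis add_diff_cancel_left')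
  ultimately show ?thesis using c z unfolding s_def by blast
qed



lemma sg_edge: "simple_graph V E \<Longrightarrow> {x,y} \<in> E \<Longrightarrow> x \<in> V \<and> y \<in> V \<and> x \<noteq> y"
  unfolding simple_graph_def by (metis doubleton_eq_iff)

lemma sg_edge_form: "simple_graph V E \<Longrightarrow> e \<in> E \<Longrightarrow> \<exists>x y. e = {x,y} \<and> x \<noteq> y"
  unfolding simple_graph_def by blast

lemma sg_mono: "simple_graph V E \<Longrightarrow> E' \<subseteq> E \<Longrightarrow> simple_graph V E'"
  unfolding simple_graph_def by blast

lemma sg_finite: "simple_graph V E \<Longrightarrow> finite E"
proof -
  assume s: "simple_graph V E"
  have "E \<subseteq> Pow V"
  proof
    fix e assume "e \<in> E"
    then obtain u v where "u \<in> V" "v \<in> V" "e = {u,v}" using s unfolding simple_graph_def by blast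
    thus "e \<in> Pow V" by simp
  qed
  moreover have "finite V" using s unfolding simple_graph_def by blast
  ultimately show ?thesis by (meson finite_Pow_iff finite_subset)
qed

lemma walk_mono: "is_walk V E p \<Longrightarrow> E \<subseteq> E' \<Longrightarrow> is_walk V E' p"
  unfolding is_walk_def by blast

lemma acyc_mono: "acyclic_graph V E' \<Longrightarrow> E \<subseteq> E' \<Longrightarrow> acyclic_graph V E"
  unfolding acyclic_graph_def is_cycle_def using walk_mono by blast

lemma walk_Cons:
  assumes "p \<noteq> []"
  shows "is_walk V E (x#p) \<longleftrightarrow> x \<in> V \<and> {x, hd p} \<in> E \<and> is_walk V E p"
proof
  assume w: "is_walk V E (x#p)"
  have "{(x#p)!0, (x#p)!Suc 0} \<in> E" using w assms unfolding is_walk_def by auto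
  hence "{x, hd p} \<in> E" using assms by (simp add: hd_conv_nth)
  moreover have "is_walk V E p" unfolding is_walk_def
  proof (intro conjI allI impI)
    show "p \<noteq> []" by fact
    show "set p \<subseteq> V" using w unfolding is_walk_def by auto
    fix i assume "Suc i < length p"
    hence "Suc (Suc i) < length (x#p)" by simp
    hence "{(x#p)!Suc i, (x#p)!Suc (Suc i)} \<in> E" using w unfolding is_walk_def by blast
    thus "{p!i, p!Suc i} \<in> E" by simp
  qed
  moreover have "x \<in> V" using w unfolding is_walk_def by auto
  ultimately show "x \<in> V \<and> {x, hd p} \<in> E \<and> is_walk V E p" by blast
next
  assume h: "x \<in> V \<and> {x, hd p} \<in> E \<and> is_walk V E p"
  show "is_walk V E (x#p)" unfolding is_walk_def
  proof (intro conjI allI impI)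
    show "x # p \<noteq> []" by simp
    show "set (x#p) \<subseteq> V" using h unfolding is_walk_def by auto
    fix i assume i: "Suc i < length (x#p)"
    show "{(x#p)!i, (x#p)!Suc i} \<in> E"
    proof (cases i)
      case 0
      then show ?thesis using h assms by (simp add: hd_conv_nth)
    next
      case (Suc j)
      then show ?thesis using h i unfolding is_walk_def by simp
    qed
  qed
qed

lemma cycle_from_path:
  assumes w: "is_walk V E p" and d: "distinct p" and ij: "i + 2 \<le> j" and jl: "j < length p"
    and e: "{p!j, p!i} \<in> E"
  shows "\<not> acyclic_graph V E"
proof -
  define c where "c = take (j - i + 1) (drop i p)"
  have len: "length c = j - i + 1" unfolding c_def using ij jl by simp
  have cn: "\<And>k. k \<le> j - i \<Longrightarrow> c!k = p!(i+k)" unfolding c_def using ij jl by simp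
  have "is_walk V E c" unfolding is_walk_def
  proof (intro conjI allI impI)
    show "c \<noteq> []" using len by auto
    have "set c \<subseteq> set p" unfolding c_def by (meson set_drop_subset set_take_subset subset_trans)
    thus "set c \<subseteq> V" using w unfolding is_walk_def by auto
    fix k assume k: "Suc k < length c"
    have "{p!(i+k), p!Suc (i+k)} \<in> E" using w k len jl unfolding is_walk_def by auto
    thus "{c!k, c!Suc k} \<in> E" using cn[of k] cn[of "Suc k"] k len by simp
  qed
  moreover have "distinct c" unfolding c_def using d by simp
  moreover have "length c \<ge> 3" using len ij by simp
  moreover have "hd c = p!i" using cn[of 0] len by (subst hd_conv_nth) auto
  moreover have "last c = p!j" using cn[of "j-i"] len ij by (subst last_conv_nth) auto
  ultimately have "is_cycle V E c" unfolding is_cycle_def using e by simp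
  thus ?thesis unfolding acyclic_graph_def by blast
qed

definition maxpath where
  "maxpath V E p \<longleftrightarrow> is_walk V E p \<and> distinct p \<and>
     (\<forall>q. is_walk V E q \<and> distinct q \<longrightarrow> length q \<le> length p)"

lemma maxpath_ex:
  assumes s: "simple_graph V E" and e: "{a,b} \<in> E"
  shows "\<exists>p. maxpath V E p \<and> length p \<ge> 2"
proof -
  define P where "P n \<longleftrightarrow> (\<exists>q. is_walk V E q \<and> distinct q \<and> length q = n)" for n
  have ab: "a \<in> V" "b \<in> V" "a \<noteq> b" using sg_edge[OF s e] by auto
  have w2: "is_walk V E [a,b]" unfolding is_walk_def using ab e by (auto simp: less_Suc_eq)
  hence P2: "P 2" unfolding P_def using ab by (intro exI[of _ "[a,b]"]) auto
  have fV: "finite V" using s unfolding simple_graph_def by blast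
  have bd: "\<forall>y. P y \<longrightarrow> y \<le> card V"
  proof (intro allI impI)
    fix y assume "P y"
    then obtain q where q: "is_walk V E q" "distinct q" "length q = y" unfolding P_def by blast
    have "length q = card (set q)" using q(2) by (simp add: distinct_card)
    also have "\<dots> \<le> card V" using q(1) fV unfolding is_walk_def by (intro card_mono) auto
    finally show "y \<le> card V" using q(3) by simp
  qed
  obtain n where n: "P n" "\<forall>y. P y \<longrightarrow> y \<le> n" using Nat.ex_has_greatest_nat[OF P2 bd] by blast
  then obtain p where p: "is_walk V E p" "distinct p" "length p = n" unfolding P_def by blast
  have "maxpath V E p" unfolding maxpath_def using p n unfolding P_def by blast
  moreover have "n \<ge> 2" using n P2 by blast
  ultimately show ?thesis using p by blast
qed

lemma maxpath_hd_nbr: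
  assumes s: "simple_graph V E" and a: "acyclic_graph V E" and m: "maxpath V E p"
    and l: "length p \<ge> 2" and e: "{x, hd p} \<in> E"
  shows "x = p!1"
proof (rule ccontr)
  assume nx: "x \<noteq> p!1"
  have w: "is_walk V E p" and d: "distinct p" using m unfolding maxpath_def by auto
  have pne: "p \<noteq> []" using l by auto
  show False
  proof (cases "x \<in> set p")
    case False
    have "is_walk V E (x#p)" using walk_Cons[OF pne] w e sg_edge[OF s e] by blast
    moreover have "distinct (x#p)" using False d by simp
    ultimately have "length (x#p) \<le> length p" using m unfolding maxpath_def by blast
    thus False by simp
  next
    case True
    then obtain j where j: "j < length p" "p!j = x" by (metis in_set_conv_nth)
    have "j \<noteq> 0"
    proof
      assume "j = 0"
      hence "x = hd p" using j pne by (simp add: hd_conv_nth)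
      thus False using sg_edge[OF s e] by simp
    qed
    moreover have "j \<noteq> 1" using j nx by auto
    ultimately have "0 + 2 \<le> j" by simp
    from cycle_from_path[OF w d this j(1)] show False using a e j pne by (simp add: hd_conv_nth)
  qed
qed


lemma at_edge_other: "simple_graph V E \<Longrightarrow> e \<in> E \<Longrightarrow> x \<in> e \<Longrightarrow> \<exists>z. e = {x,z} \<and> z \<noteq> x"
proof -
  assume "simple_graph V E" "e \<in> E" "x \<in> e"
  then obtain u v where uv: "e = {u,v}" "u \<noteq> v" using sg_edge_form by blast
  show ?thesis
  proof (cases "x = u")
    case True thus ?thesis using uv by blast
  next
    case False
    hence "x = v" using uv \<open>x \<in> e\<close> by blast
    thus ?thesis using uv by (intro exI[of _ u]) (auto simp: insert_commute)
  qed
qed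

lemma leaf_of_maxhd:
  assumes s: "simple_graph V E" and a: "acyclic_graph V E" and m: "maxpath V E p"
    and l: "length p \<ge> 2"
  shows "{e\<in>E. hd p \<in> e} = {{hd p, p!1}}"
proof
  have w: "is_walk V E p" using m unfolding maxpath_def by auto
  have "{p!0, p!Suc 0} \<in> E" using w l unfolding is_walk_def by auto
  hence "{hd p, p!1} \<in> E" using l by (subst hd_conv_nth) auto
  thus "{{hd p, p!1}} \<subseteq> {e\<in>E. hd p \<in> e}" by auto
  show "{e\<in>E. hd p \<in> e} \<subseteq> {{hd p, p!1}}"
  proof
    fix e assume "e \<in> {e\<in>E. hd p \<in> e}"
    hence e: "e \<in> E" "hd p \<in> e" by auto
    then obtain z where z: "e = {hd p, z}" using at_edge_other[OF s] by blast
    hence "{z, hd p} \<in> E" using e by (simp add: insert_commute)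
    hence "z = p!1" using maxpath_hd_nbr[OF s a m l] by blast
    thus "e \<in> {{hd p, p!1}}" using z by simp
  qed
qed

lemma nbr_u_leaf:
  assumes s: "simple_graph V E" and a: "acyclic_graph V E" and m: "maxpath V E p"
    and l: "length p \<ge> 3" and e: "{z, p!1} \<in> E" and zy: "z \<noteq> p!2"
  shows "{e\<in>E. z \<in> e} = {{z, p!1}}"
proof -
  have w: "is_walk V E p" and d: "distinct p" using m unfolding maxpath_def by auto
  have pne: "p \<noteq> []" using l by auto
  show ?thesis
  proof (cases "z \<in> set p")
    case True
    then obtain j where j: "j < length p" "p!j = z" by (metis in_set_conv_nth)
    show ?thesis
    proof (cases "j = 0")
      case True
      hence "z = hd p" using j pne by (simp add: hd_conv_nth)
      thus ?thesis using leaf_of_maxhd[OF s a m] l by simp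
    next
      case False
      have "j \<noteq> 1" using j sg_edge[OF s e] by auto
      moreover have "j \<noteq> 2" using j zy by auto
      ultimately have "1 + 2 \<le> j" using False by simp
      from cycle_from_path[OF w d this j(1)] have False using a e j by simp
      thus ?thesis ..
    qed
  next
    case False
    define q where "q = z # tl p"
    have tne: "tl p \<noteq> []" using l by (cases p) auto
    have hdt: "hd (tl p) = p!1" using tne by (cases p) (auto simp: hd_conv_nth)
    have "is_walk V E (hd p # tl p)" using w pne by simp
    hence wt: "is_walk V E (tl p)" using walk_Cons[OF tne] by blast
    have "is_walk V E q" unfolding q_def using walk_Cons[OF tne] wt e hdt sg_edge[OF s e] by simp
    moreover have "distinct q" unfolding q_def using False d by (cases p) auto
    moreover have "length q = length p" unfolding q_def using pne by simp
    ultimately have mq: "maxpath V E q" using m unfolding maxpath_def by simp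
    have "q!1 = p!1" unfolding q_def using pne by (cases p) auto
    moreover have "hd q = z" unfolding q_def by simp
    ultimately show ?thesis using leaf_of_maxhd[OF s a mq] l \<open>length q = length p\<close> by simp
  qed
qed

definition good :: "'a set set \<Rightarrow> bool" where
  "good E \<longleftrightarrow> (\<forall>a b. {a,b} \<in> E \<longrightarrow> (\<exists>e\<in>E. e \<noteq> {a,b} \<and> (a \<in> e \<or> b \<in> e)))"

lemma len2_False:
  assumes s: "simple_graph V E" and a: "acyclic_graph V E" and m: "maxpath V E p"
    and l: "length p = 2" and g: "good E"
  shows False
proof -
  obtain x y where p: "p = [x,y]" using l by (cases p; cases "tl p") auto
  have w: "is_walk V E p" using m unfolding maxpath_def by auto
  have exy: "{x,y} \<in> E" using w unfolding p is_walk_def by auto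
  have xy: "x \<in> V" "y \<in> V" "x \<noteq> y" using sg_edge[OF s exy] by auto
  have lx: "{e\<in>E. x \<in> e} = {{x,y}}" using leaf_of_maxhd[OF s a m] l p by simp
  obtain e where e: "e \<in> E" "e \<noteq> {x,y}" "x \<in> e \<or> y \<in> e" using g exy unfolding good_def by blast
  have "y \<in> e" using e lx by blast
  then obtain z where z: "e = {y,z}" "z \<noteq> y" using at_edge_other[OF s e(1)] by blast
  have zx: "z \<noteq> x" using z e by (auto simp: insert_commute)
  have ez: "{z,y} \<in> E" using z e by (simp add: insert_commute)
  have "z \<in> V" using sg_edge[OF s ez] by simp
  have "is_walk V E [z,y,x]" unfolding is_walk_def using xy \<open>z \<in> V\<close> ez exy
    by (auto simp: less_Suc_eq insert_commute)
  moreover have "distinct [z,y,x]" using xy z zx by auto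
  ultimately have "length [z,y,x] \<le> length p" using m unfolding maxpath_def by blast
  thus False using l by simp
qed

lemma tree_structure:
  assumes s: "simple_graph V E" and a: "acyclic_graph V E" and g: "good E" and ne: "E \<noteq> {}"
  obtains u y L where "u \<noteq> y" "{u,y} \<in> E" "finite L" "L \<noteq> {}" "u \<notin> L" "y \<notin> L"
     "\<forall>l\<in>L. {e\<in>E. l \<in> e} = {{l,u}}" "{e\<in>E. u \<in> e} = insert {u,y} ((\<lambda>l. {l,u}) ` L)"
proof -
  obtain e0 where "e0 \<in> E" using ne by blast
  then obtain a0 b0 where "{a0,b0} \<in> E" using sg_edge_form[OF s] by blast
  then obtain p where m: "maxpath V E p" and l2: "length p \<ge> 2" using maxpath_ex[OF s] by blast
  have l: "length p \<ge> 3" using len2_False[OF s a m _ g] l2 by fastforce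
  have w: "is_walk V E p" and d: "distinct p" using m unfolding maxpath_def by auto
  define u where "u = p!1"
  define y where "y = p!2"
  define L where "L = {z. {z,u} \<in> E \<and> z \<noteq> y}"
  have uy: "u \<noteq> y" unfolding u_def y_def using d l by (subst nth_eq_iff_index_eq) auto
  have "{p!1, p!Suc 1} \<in> E" using w l unfolding is_walk_def by auto
  hence euy: "{u,y} \<in> E" unfolding u_def y_def by (simp add: numeral_2_eq_2)
  have fV: "finite V" using s unfolding simple_graph_def by blast
  have "L \<subseteq> V" unfolding L_def using sg_edge[OF s] by blast
  hence fL: "finite L" using fV finite_subset by blast
  have "{p!0, p!Suc 0} \<in> E" using w l unfolding is_walk_def by auto
  hence "{p!0, u} \<in> E" unfolding u_def by simp
  moreover have "p!0 \<noteq> y" unfolding y_def using d l by (subst nth_eq_iff_index_eq) auto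
  ultimately have "p!0 \<in> L" unfolding L_def by blast
  hence Lne: "L \<noteq> {}" by blast
  have uL: "u \<notin> L" unfolding L_def using sg_edge[OF s] by blast
  have yL: "y \<notin> L" unfolding L_def by blast
  have lv: "\<forall>l\<in>L. {e\<in>E. l \<in> e} = {{l,u}}"
    using nbr_u_leaf[OF s a m l] unfolding L_def u_def y_def by blast
  have "{e\<in>E. u \<in> e} = insert {u,y} ((\<lambda>l. {l,u}) ` L)"
  proof
    show "{e\<in>E. u \<in> e} \<subseteq> insert {u,y} ((\<lambda>l. {l,u}) ` L)"
    proof
      fix e assume "e \<in> {e\<in>E. u \<in> e}"
      hence e: "e \<in> E" "u \<in> e" by auto
      then obtain z where z: "e = {u,z}" using at_edge_other[OF s] by blast
      show "e \<in> insert {u,y} ((\<lambda>l. {l,u}) ` L)"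
      proof (cases "z = y")
        case True thus ?thesis using z by simp
      next
        case False
        hence "z \<in> L" unfolding L_def using z e by (simp add: insert_commute)
        thus ?thesis using z by (auto simp: insert_commute)
      qed
    qed
    show "insert {u,y} ((\<lambda>l. {l,u}) ` L) \<subseteq> {e\<in>E. u \<in> e}"
      using euy unfolding L_def by auto
  qed
  thus thesis using that[OF uy euy fL Lne uL yL lv] by blast
qed



lemma wsum_cong:
  assumes "{e\<in>E. x \<in> e} = {e\<in>E'. x \<in> e}" and "\<forall>e\<in>E'. x \<in> e \<longrightarrow> f e = f' e"
  shows "wsum E f x = wsum E' f' x"
  unfolding wsum_def assms(1) using assms(2) by (intro sum.cong) auto

lemma extend:
  fixes f' :: "'a set \<Rightarrow> 'g::ab_group_add"
  assumes G4: "infinite (UNIV :: 'g set) \<or> card (UNIV :: 'g set) \<ge> 4"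
    and E: "E = E' \<union> (\<lambda>l. {l,u}) ` L"
    and finL: "finite L" and Lne: "L \<noteq> {}"
    and uL: "u \<notin> L" and yL: "y \<notin> L" and uy: "u \<noteq> y"
    and atu: "{e\<in>E'. u \<in> e} = {{u,y}}"
    and atL: "\<forall>l\<in>L. \<forall>e\<in>E'. l \<notin> e"
    and nz: "\<forall>e\<in>E'. f' e \<noteq> 0"
    and valid: "\<forall>a b. {a,b} \<in> E' \<longrightarrow> {a,b} \<noteq> {u,y} \<longrightarrow> wsum E' f' a \<noteq> wsum E' f' b"
  shows "\<exists>f :: 'a set \<Rightarrow> 'g. (\<forall>e\<in>E. f e \<noteq> 0) \<and> (\<forall>a b. {a,b} \<in> E \<longrightarrow> wsum E f a \<noteq> wsum E f b)"
proof -
  obtain l0 where l0: "l0 \<in> L" using Lne by blast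
  have uyE: "{u,y} \<in> E'" using atu by blast
  define b where "b = f' {u,y}"
  have b0: "b \<noteq> 0" unfolding b_def using nz uyE by blast
  define t where "t = wsum E' f' y"
  obtain c z where cz: "c \<noteq> 0" "z \<noteq> 0" "b + sum (\<lambda>_. c) (L - {l0}) + z \<noteq> t"
      "b + sum (\<lambda>_. c) (L - {l0}) \<noteq> 0" "b + sum (\<lambda>_. c) (L - {l0}) + z \<noteq> c"
    using grp[OF G4 b0, of "L - {l0}" t] by blast
  define W where "W = b + sum (\<lambda>_. c) (L - {l0}) + z"
  have Wz: "W \<noteq> z" unfolding W_def using cz(4) by simp
  define f where "f e = (if e \<in> E' then f' e else if e = {l0,u} then z else c)" for e
  have newE: "\<And>l. l \<in> L \<Longrightarrow> {l,u} \<notin> E'" using atL by blast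
  have F1: "wsum E f x = wsum E' f' x" if "x \<notin> L" "x \<noteq> u" for x
  proof (rule wsum_cong)
    show "{e\<in>E. x \<in> e} = {e\<in>E'. x \<in> e}" unfolding E using that by auto
    show "\<forall>e\<in>E'. x \<in> e \<longrightarrow> f e = f' e" unfolding f_def by simp
  qed
  have F2: "wsum E f l = (if l = l0 then z else c)" if l: "l \<in> L" for l
  proof -
    have "{e\<in>E. l \<in> e} = {{l,u}}"
    proof
      show "{e\<in>E. l \<in> e} \<subseteq> {{l,u}}"
      proof
        fix e assume "e \<in> {e\<in>E. l \<in> e}"
        hence e: "e \<in> E" "l \<in> e" by auto
        hence "e \<notin> E'" using atL l by blast
        then obtain l' where l': "l' \<in> L" "e = {l',u}" using e unfolding E by blast
        hence "l' = l" using e uL l by auto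
        thus "e \<in> {{l,u}}" using l' by simp
      qed
      show "{{l,u}} \<subseteq> {e\<in>E. l \<in> e}" unfolding E using l by auto
    qed
    hence "wsum E f l = f {l,u}" unfolding wsum_def by simp
    also have "\<dots> = (if l = l0 then z else c)" unfolding f_def using newE[OF l] uL l l0
      by (auto simp: doubleton_eq_iff)
    finally show ?thesis .
  qed
  have F3: "wsum E f u = W"
  proof -
    have atuE: "{e\<in>E. u \<in> e} = insert {u,y} ((\<lambda>l. {l,u}) ` L)"
      unfolding E using atu by auto
    have nin: "{u,y} \<notin> (\<lambda>l. {l,u}) ` L" using yL uy by (auto simp: doubleton_eq_iff)
    have inj: "inj_on (\<lambda>l. {l,u}) L" using uL by (auto simp: inj_on_def doubleton_eq_iff)
    have "wsum E f u = f {u,y} + sum (\<lambda>e. f e) ((\<lambda>l. {l,u}) ` L)"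
      unfolding wsum_def atuE using finL nin by (simp add: sum.insert)
    also have "f {u,y} = b" unfolding f_def b_def using uyE by simp
    also have "sum (\<lambda>e. f e) ((\<lambda>l. {l,u}) ` L) = sum (\<lambda>l. f {l,u}) L"
      using sum.reindex[OF inj] by (simp add: comp_def)
    also have "\<dots> = sum (\<lambda>l. if l = l0 then z else c) L"
      using newE uL l0 unfolding f_def by (intro sum.cong) (auto simp: doubleton_eq_iff)
    also have "\<dots> = z + sum (\<lambda>_. c) (L - {l0})"
      using sum.remove[OF finL l0, of "\<lambda>l. if l = l0 then z else c"] by simp
    finally show ?thesis unfolding W_def by (simp add: algebra_simps)
  qed
  have Fy: "wsum E f y = t" unfolding t_def using F1[OF yL] uy by simp
  have WL: "wsum E f l \<noteq> W" if "l \<in> L" for l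
    using F2[OF that] Wz cz(5) unfolding W_def by auto
  have N: "\<forall>e\<in>E. f e \<noteq> 0" unfolding f_def E using nz cz(1,2) by auto
  have V: "\<forall>a a'. {a,a'} \<in> E \<longrightarrow> wsum E f a \<noteq> wsum E f a'"
  proof (intro allI impI)
    fix a a' assume aa: "{a,a'} \<in> E"
    show "wsum E f a \<noteq> wsum E f a'"
    proof (cases "{a,a'} \<in> E'")
      case True
      show ?thesis
      proof (cases "{a,a'} = {u,y}")
        case True
        have Wt: "W \<noteq> t" using cz(3) unfolding W_def .
        have "(a = u \<and> a' = y) \<or> (a = y \<and> a' = u)" using True by (auto simp: doubleton_eq_iff)
        thus ?thesis
        proof
          assume "a = u \<and> a' = y" thus ?thesis using F3 Fy Wt by simp
        next
          assume "a = y \<and> a' = u" thus ?thesis using F3 Fy Wt by simp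
        qed
      next
        case False
        have ine: "{a,a'} \<in> E'" by fact
        have "u \<notin> {a,a'}"
        proof
          assume "u \<in> {a,a'}"
          hence "{a,a'} \<in> {e\<in>E'. u \<in> e}" using ine by simp
          thus False using atu False by simp
        qed
        hence ua: "a \<noteq> u" "a' \<noteq> u" by auto
        have La: "a \<notin> L" "a' \<notin> L" using atL ine by auto
        have "wsum E f a = wsum E' f' a" by (rule F1[OF La(1) ua(1)])
        moreover have "wsum E f a' = wsum E' f' a'" by (rule F1[OF La(2) ua(2)])
        moreover have "wsum E' f' a \<noteq> wsum E' f' a'" using valid ine False by blast
        ultimately show ?thesis by simp
      qed
    next
      case False
      then obtain l where l: "l \<in> L" "{a,a'} = {l,u}" using aa unfolding E by blast
      hence "(a = l \<and> a' = u) \<or> (a = u \<and> a' = l)" by (auto simp: doubleton_eq_iff)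
      thus ?thesis using WL[OF l(1)] F3 by auto
    qed
  qed
  show ?thesis using N V by blast
qed



lemma main:
  fixes E :: "'a set set"
  assumes G4: "infinite (UNIV :: 'g::ab_group_add set) \<or> card (UNIV :: 'g set) \<ge> 4"
  shows "simple_graph V E \<Longrightarrow> acyclic_graph V E \<Longrightarrow> good E \<Longrightarrow>
    \<exists>f :: 'a set \<Rightarrow> 'g. (\<forall>e\<in>E. f e \<noteq> 0) \<and> (\<forall>a b. {a,b} \<in> E \<longrightarrow> wsum E f a \<noteq> wsum E f b)"
proof (induction "card E" arbitrary: E rule: less_induct)
  case less
  have s: "simple_graph V E" and a: "acyclic_graph V E" and g: "good E" using less.prems by auto
  show ?case
  proof (cases "E = {}")
    case True
    show ?thesis using True by simp
  next
    case False
    obtain u y L where uy: "u \<noteq> y" and uyE: "{u,y} \<in> E" and finL: "finite L" and Lne: "L \<noteq> {}"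
      and uL: "u \<notin> L" and yL: "y \<notin> L" and lv: "\<forall>l\<in>L. {e\<in>E. l \<in> e} = {{l,u}}"
      and atu: "{e\<in>E. u \<in> e} = insert {u,y} ((\<lambda>l. {l,u}) ` L)"
      by (rule tree_structure[OF s a g False])
    define N where "N = (\<lambda>l. {l,u}) ` L"
    define E' where "E' = E - N"
    have fE: "finite E" using sg_finite[OF s] .
    have NE: "N \<subseteq> E" unfolding N_def using lv by blast
    have Eeq: "E = E' \<union> (\<lambda>l. {l,u}) ` L" unfolding E'_def using NE unfolding N_def by blast
    have uyN: "{u,y} \<notin> N" unfolding N_def using yL uy by (auto simp: doubleton_eq_iff)
    have atu': "{e\<in>E'. u \<in> e} = {{u,y}}"
    proof -
      have "{e\<in>E'. u \<in> e} = {e\<in>E. u \<in> e} - N" unfolding E'_def by auto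
      also have "\<dots> = insert {u,y} N - N" unfolding atu N_def ..
      also have "\<dots> = {{u,y}}" using uyN by auto
      finally show ?thesis .
    qed
    have atL': "\<forall>l\<in>L. \<forall>e\<in>E'. l \<notin> e"
    proof (intro ballI)
      fix l e assume l: "l \<in> L" and e: "e \<in> E'"
      show "l \<notin> e"
      proof
        assume "l \<in> e"
        hence "e \<in> {e\<in>E. l \<in> e}" using e unfolding E'_def by simp
        hence "e = {l,u}" using lv l by simp
        hence "e \<in> N" unfolding N_def using l by simp
        thus False using e unfolding E'_def by simp
      qed
    qed
    have cardlt: "card E' < card E"
    proof (rule psubset_card_mono[OF fE])
      obtain l where "l \<in> L" using Lne by blast
      hence "{l,u} \<in> N" "{l,u} \<in> E" unfolding N_def using NE N_def by auto
      thus "E' \<subset> E" unfolding E'_def by blast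
    qed
    have E'E: "E' \<subseteq> E" unfolding E'_def by blast
    have s': "simple_graph V E'" by (rule sg_mono[OF s E'E])
    have a': "acyclic_graph V E'" by (rule acyc_mono[OF a E'E])
    show ?thesis
    proof (cases "\<exists>e\<in>E. y \<in> e \<and> e \<noteq> {u,y}")
      case True
      then obtain ey where ey: "ey \<in> E" "y \<in> ey" "ey \<noteq> {u,y}" by blast
      have g': "good E'" unfolding good_def
      proof (intro allI impI)
        fix b b' assume bb: "{b,b'} \<in> E'"
        show "\<exists>e\<in>E'. e \<noteq> {b,b'} \<and> (b \<in> e \<or> b' \<in> e)"
        proof (cases "{b,b'} = {u,y}")
          case True
          have "ey \<notin> N"
          proof
            assume "ey \<in> N"
            then obtain l where "l \<in> L" "ey = {l,u}" unfolding N_def by blast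
            thus False using ey(2) yL uy by auto
          qed
          hence "ey \<in> E'" unfolding E'_def using ey by simp
          moreover have "y \<in> {b,b'}" using True by simp
          ultimately show ?thesis using ey True by blast
        next
          case False
          have "u \<notin> {b,b'}"
          proof
            assume "u \<in> {b,b'}"
            hence "{b,b'} \<in> {e\<in>E'. u \<in> e}" using bb by simp
            thus False using atu' False by simp
          qed
          have bL: "b \<notin> L" "b' \<notin> L" using atL' bb by auto
          have "{b,b'} \<in> E" using bb unfolding E'_def by simp
          then obtain e where e: "e \<in> E" "e \<noteq> {b,b'}" "b \<in> e \<or> b' \<in> e"
            using g unfolding good_def by blast
          have "e \<notin> N"
          proof
            assume "e \<in> N"
            then obtain l where "l \<in> L" "e = {l,u}" unfolding N_def by blast
            thus False using e(3) bL \<open>u \<notin> {b,b'}\<close> by auto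
          qed
          hence "e \<in> E'" unfolding E'_def using e by simp
          thus ?thesis using e by blast
        qed
      qed
      obtain f' :: "'a set \<Rightarrow> 'g" where f': "\<forall>e\<in>E'. f' e \<noteq> 0"
        "\<forall>b b'. {b,b'} \<in> E' \<longrightarrow> wsum E' f' b \<noteq> wsum E' f' b'"
        using less.hyps[OF cardlt s' a' g'] by blast
      have v': "\<forall>b b'. {b,b'} \<in> E' \<longrightarrow> {b,b'} \<noteq> {u,y} \<longrightarrow> wsum E' f' b \<noteq> wsum E' f' b'"
        using f'(2) by blast
      show ?thesis
        by (rule extend[OF G4 Eeq finL Lne uL yL uy atu' atL' f'(1) v'])
    next
      case False
      hence yleaf: "\<forall>e\<in>E. y \<in> e \<longrightarrow> e = {u,y}" by blast
      define E1 where "E1 = E' - {{u,y}}"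
      have E1E': "E1 \<subseteq> E'" unfolding E1_def by blast
      have noU: "\<forall>e\<in>E1. u \<notin> e" using atu' unfolding E1_def by blast
      have noY: "\<forall>e\<in>E1. y \<notin> e" using yleaf unfolding E1_def E'_def by blast
      have noL: "\<forall>l\<in>L. \<forall>e\<in>E1. l \<notin> e" using atL' E1E' by blast
      have g1: "good E1" unfolding good_def
      proof (intro allI impI)
        fix b b' assume bb: "{b,b'} \<in> E1"
        have bU: "b \<noteq> u" "b' \<noteq> u" using noU bb by auto
        have bY: "b \<noteq> y" "b' \<noteq> y" using noY bb by auto
        have bL: "b \<notin> L" "b' \<notin> L" using noL bb by auto
        have "{b,b'} \<in> E" using bb unfolding E1_def E'_def by simp
        then obtain e where e: "e \<in> E" "e \<noteq> {b,b'}" "b \<in> e \<or> b' \<in> e"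
          using g unfolding good_def by blast
        have "e \<notin> N"
        proof
          assume "e \<in> N"
          then obtain l where "l \<in> L" "e = {l,u}" unfolding N_def by blast
          thus False using e(3) bL bU by auto
        qed
        moreover have "e \<noteq> {u,y}" using e(3) bU bY by auto
        ultimately have "e \<in> E1" unfolding E1_def E'_def using e by simp
        thus "\<exists>e\<in>E1. e \<noteq> {b,b'} \<and> (b \<in> e \<or> b' \<in> e)" using e by blast
      qed
      have cardlt1: "card E1 < card E"
      proof -
        have "card E1 \<le> card E'" using E1E' fE unfolding E'_def by (intro card_mono) auto
        thus ?thesis using cardlt by simp
      qed
      have E1E: "E1 \<subseteq> E" using E1E' unfolding E'_def by blast
      have s1: "simple_graph V E1" by (rule sg_mono[OF s E1E])
      have a1: "acyclic_graph V E1" by (rule acyc_mono[OF a E1E])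
      obtain f1 :: "'a set \<Rightarrow> 'g" where f1: "\<forall>e\<in>E1. f1 e \<noteq> 0"
        "\<forall>b b'. {b,b'} \<in> E1 \<longrightarrow> wsum E1 f1 b \<noteq> wsum E1 f1 b'"
        using less.hyps[OF cardlt1 s1 a1 g1] by blast
      obtain b0 :: 'g where b0: "b0 \<noteq> 0" using avoid3[OF G4] by blast
      define f' where "f' = f1({u,y} := b0)"
      have nz': "\<forall>e\<in>E'. f' e \<noteq> 0" unfolding f'_def using f1(1) b0 unfolding E1_def by auto
      have valid': "\<forall>b b'. {b,b'} \<in> E' \<longrightarrow> {b,b'} \<noteq> {u,y} \<longrightarrow> wsum E' f' b \<noteq> wsum E' f' b'"
      proof (intro allI impI)
        fix b b' assume bb: "{b,b'} \<in> E'" and ne: "{b,b'} \<noteq> {u,y}"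
        hence bb1: "{b,b'} \<in> E1" unfolding E1_def by simp
        have ws: "wsum E' f' x = wsum E1 f1 x" if "x \<noteq> u" "x \<noteq> y" for x
        proof (rule wsum_cong)
          show "{e\<in>E'. x \<in> e} = {e\<in>E1. x \<in> e}" unfolding E1_def using that by auto
          show "\<forall>e\<in>E1. x \<in> e \<longrightarrow> f' e = f1 e" unfolding f'_def E1_def by simp
        qed
        have "b \<noteq> u" "b' \<noteq> u" "b \<noteq> y" "b' \<noteq> y" using noU noY bb1 by auto
        thus "wsum E' f' b \<noteq> wsum E' f' b'" using ws f1(2) bb1 by simp
      qed
      show ?thesis
        by (rule extend[OF G4 Eeq finL Lne uL yL uy atu' atL' nz' valid'])
    qed
  qed
qed

theorem theorem5:
  fixes V :: "'a set" and E :: "'a set set"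
  assumes "tree V E" and "card V \<ge> 3"
    and "infinite (UNIV :: 'g::ab_group_add set) \<or> card (UNIV :: 'g set) \<ge> 4"
  shows "\<exists>f :: 'a set \<Rightarrow> 'g. (\<forall>e\<in>E. f e \<noteq> 0) \<and>
           (\<forall>u v. {u, v} \<in> E \<longrightarrow> wsum E f u \<noteq> wsum E f v)"
proof -
  have s: "simple_graph V E" and a: "acyclic_graph V E" and c: "connected_graph V E"
    using assms(1) unfolding tree_def by auto
  have fV: "finite V" using s unfolding simple_graph_def by blast
  have g: "good E" unfolding good_def
  proof (intro allI impI)
    fix x y assume xy: "{x,y} \<in> E"
    show "\<exists>e\<in>E. e \<noteq> {x,y} \<and> (x \<in> e \<or> y \<in> e)"
    proof (rule ccontr)
      assume H: "\<not> ?thesis"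
      have xyV: "x \<in> V" "y \<in> V" using sg_edge[OF s xy] by auto
      have "\<not> V \<subseteq> {x,y}"
      proof
        assume "V \<subseteq> {x,y}"
        hence "card V \<le> card {x,y}" by (intro card_mono) auto
        also have "\<dots> \<le> 2" using card_length[of "[x,y]"] by simp
        finally show False using assms(2) by simp
      qed
      then obtain w where w: "w \<in> V" "w \<notin> {x,y}" by blast
      obtain p where p: "is_walk V E p" "hd p = x" "last p = w"
        using c xyV(1) w(1) unfolding connected_graph_def by blast
      have pne: "p \<noteq> []" using p(1) unfolding is_walk_def by simp
      have all: "i < length p \<longrightarrow> p!i \<in> {x,y}" for i
      proof (induction i)
        case 0
        show ?case using p(2) pne by (simp add: hd_conv_nth)
      next
        case (Suc i)
        show ?case
        proof
          assume i: "Suc i < length p"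
          hence ei: "{p!i, p!Suc i} \<in> E" using p(1) unfolding is_walk_def by blast
          have "p!i \<in> {x,y}" using Suc i by simp
          hence hx: "x \<in> {p!i, p!Suc i} \<or> y \<in> {p!i, p!Suc i}" by auto
          have "{p!i, p!Suc i} = {x,y}"
          proof (rule ccontr)
            assume ne: "{p!i, p!Suc i} \<noteq> {x,y}"
            have "\<exists>e\<in>E. e \<noteq> {x,y} \<and> (x \<in> e \<or> y \<in> e)"
              by (rule bexI[of _ "{p!i, p!Suc i}"]) (use ne hx ei in auto)
            thus False using H by simp
          qed
          thus "p!Suc i \<in> {x,y}" by (metis insertI1 insertI2)
        qed
      qed
      have "last p = p!(length p - 1)" using pne by (simp add: last_conv_nth)
      hence "w \<in> {x,y}" using all[of "length p - 1"] p(3) pne by simp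
      thus False using w by simp
    qed
  qed
  show ?thesis using main[OF assms(3) s a g] by blast
qed

end
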